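(* Let $(X_t)_{t\in\mathbb{T}}$ be an $\mathbb{R}^d$-valued Markov process with evolution system $U(s,t)$, and let $(T(t))_{t\ge0}$ be the semigroup of its space-time process, i.e. \[T(t)f(s,x):=\mathbb{E}\big(f(s+t,X_{s+t})\mid X_s=x\big)=U(s,s+t)g_{s+t}(x),\qquad g_r:=f(r,\cdot),\] for bounded measurable $f$ on $\mathbb{T}\times\mathbb{R}^d$. Then the following are equivalent: (i) $(U(s,t))_{s,t\in\mathbb{T},s\le t}$ is a Feller evolution system on $C_\infty(\mathbb{R}^d)$; (ii) $(T(t))_{t\ge0}$ is a Feller semigroup on $C_\infty(\mathbb{T}\times\mathbb{R}^d)$.
   Context: $\mathbb{T}$ denotes either $\mathbb{R}$ or $[0,\infty)$. The evolution system of $X$ is $U(s,t)f(x):=\mathbb{E}(f(X_t)\mid X_s=x)$, $s\le t$. $C_\infty(E)$ denotes continuous functions on $E$ vanishing at infinity, with uniform norm $\|\cdot\|_\infty$. A family $(U(s,t))_{s\le t}$ of linear operators on $C_\infty(\mathbb{R}^d)$ (mapping $C_\infty(\mathbb{R}^d)$ into itself) is a Feller evolution system if $\|U(s,t)f\|_\infty\le\|f\|_\infty$, $U(s,s)=\mathrm{id}$, $U(s,t)=U(s,r)U(r,t)$ for $s\le r\le t$, $U(s,t)f\ge0$ for $f\ge0$, and it is strongly continuous: for all $v\le w$ and $f\in C_\infty(\mathbb{R}^d)$, $\lim_{(s,t)\to(v,w),\,s\le t}\|U(s,t)f-U(v,w)f\|_\infty=0$. A Feller semigroup is a strongly continuous,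 positivity preserving contraction semigroup of operators mapping $C_\infty$ into $C_\infty$. *)

theory Defs
  imports "HOL-Probability.Probability"
begin

definition C_inf :: "'a::metric_space set \<Rightarrow> ('a \<Rightarrow> real) set" where
  "C_inf S = {f. continuous_on S f \<and>
     (\<forall>e>0. \<exists>K. compact K \<and> K \<subseteq> S \<and> (\<forall>x\<in>S - K. \<bar>f x\<bar> < e))}"

definition supnorm :: "'a set \<Rightarrow> ('a \<Rightarrow> real) \<Rightarrow> real" where
  "supnorm S f = (SUP x\<in>S. \<bar>f x\<bar>)"

definition time_set :: "real set \<Rightarrow> bool" where
  "time_set TT \<longleftrightarrow> TT = UNIV \<or> TT = {0..}"

text \<open>Transition kernels of an R^d-valued Markov process indexed by TT:
  P s t x is the law of X_t given X_s = x.\<close>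
definition markov_transition ::
  "real set \<Rightarrow> (real \<Rightarrow> real \<Rightarrow> real^'d \<Rightarrow> (real^'d) measure) \<Rightarrow> bool" where
  "markov_transition TT P \<longleftrightarrow>
     (\<forall>s\<in>TT. \<forall>t\<in>TT. s \<le> t \<longrightarrow>
        (\<forall>x. prob_space (P s t x) \<and> sets (P s t x) = sets borel) \<and>
        (\<lambda>x. P s t x) \<in> borel \<rightarrow>\<^sub>M subprob_algebra borel) \<and>
     (\<forall>s\<in>TT. \<forall>x. P s s x = return borel x) \<and>
     (\<forall>s\<in>TT. \<forall>r\<in>TT. \<forall>t\<in>TT. s \<le> r \<longrightarrow> r \<le> t \<longrightarrow>
        (\<forall>x. P s t x = P s r x \<bind> (\<lambda>y. P r t y)))"

definition evol :: "(real \<Rightarrow> real \<Rightarrow> real^'d \<Rightarrow> (real^'d) measure)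
   \<Rightarrow> real \<Rightarrow> real \<Rightarrow> (real^'d \<Rightarrow> real) \<Rightarrow> (real^'d \<Rightarrow> real)" where
  "evol P s t f x = (\<integral>y. f y \<partial>(P s t x))"

definition spacetime_sg :: "(real \<Rightarrow> real \<Rightarrow> real^'d \<Rightarrow> (real^'d) measure)
   \<Rightarrow> real \<Rightarrow> ((real \<times> (real^'d)) \<Rightarrow> real) \<Rightarrow> ((real \<times> (real^'d)) \<Rightarrow> real)" where
  "spacetime_sg P t f = (\<lambda>(s, x). evol P s (s + t) (\<lambda>y. f (s + t, y)) x)"

definition feller_evolution ::
  "real set \<Rightarrow> (real \<Rightarrow> real \<Rightarrow> (real^'d \<Rightarrow> real) \<Rightarrow> (real^'d \<Rightarrow> real)) \<Rightarrow> bool" where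
  "feller_evolution TT U \<longleftrightarrow>
     (\<forall>s\<in>TT. \<forall>t\<in>TT. s \<le> t \<longrightarrow>
        (\<forall>f\<in>C_inf UNIV. U s t f \<in> C_inf UNIV) \<and>
        (\<forall>f\<in>C_inf UNIV. \<forall>g\<in>C_inf UNIV. \<forall>a b.
            U s t (\<lambda>x. a * f x + b * g x) = (\<lambda>x. a * U s t f x + b * U s t g x)) \<and>
        (\<forall>f\<in>C_inf UNIV. supnorm UNIV (U s t f) \<le> supnorm UNIV f) \<and>
        (\<forall>f\<in>C_inf UNIV. (\<forall>x. f x \<ge> 0) \<longrightarrow> (\<forall>x. U s t f x \<ge> 0))) \<and>
     (\<forall>s\<in>TT. \<forall>f\<in>C_inf UNIV. U s s f = f) \<and>
     (\<forall>s\<in>TT. \<forall>r\<in>TT. \<forall>t\<in>TT. s \<le> r \<longrightarrow> r \<le> t \<longrightarrow>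
        (\<forall>f\<in>C_inf UNIV. U s t f = U s r (U r t f))) \<and>
     (\<forall>v\<in>TT. \<forall>w\<in>TT. v \<le> w \<longrightarrow> (\<forall>f\<in>C_inf UNIV.
        ((\<lambda>(s, t). supnorm UNIV (\<lambda>x. U s t f x - U v w f x)) \<longlongrightarrow> 0)
          (at (v, w) within {(s, t). s \<in> TT \<and> t \<in> TT \<and> s \<le> t})))"

text \<open>Feller semigroup on C_inf(S): functions are compared on S only.\<close>
definition feller_semigroup ::
  "'a::metric_space set \<Rightarrow> (real \<Rightarrow> ('a \<Rightarrow> real) \<Rightarrow> ('a \<Rightarrow> real)) \<Rightarrow> bool" where
  "feller_semigroup S T \<longleftrightarrow>
     (\<forall>t\<ge>0.
        (\<forall>f\<in>C_inf S. T t f \<in> C_inf S) \<and>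
        (\<forall>f\<in>C_inf S. \<forall>g\<in>C_inf S. \<forall>a b. \<forall>z\<in>S.
            T t (\<lambda>x. a * f x + b * g x) z = a * T t f z + b * T t g z) \<and>
        (\<forall>f\<in>C_inf S. supnorm S (T t f) \<le> supnorm S f) \<and>
        (\<forall>f\<in>C_inf S. (\<forall>z\<in>S. f z \<ge> 0) \<longrightarrow> (\<forall>z\<in>S. T t f z \<ge> 0))) \<and>
     (\<forall>f\<in>C_inf S. \<forall>z\<in>S. T 0 f z = f z) \<and>
     (\<forall>t1\<ge>0. \<forall>t2\<ge>0. \<forall>f\<in>C_inf S. \<forall>z\<in>S. T (t1 + t2) f z = T t1 (T t2 f) z) \<and>
     (\<forall>f\<in>C_inf S. \<forall>t\<ge>0.
        ((\<lambda>r. supnorm S (\<lambda>z. T r f z - T t f z)) \<longlongrightarrow> 0) (at t within {0..}))"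

end

theory Submission
  imports Defs
begin


lemma mt_prob:
  assumes "markov_transition TT P" "s\<in>TT" "t\<in>TT" "s\<le>t"
  shows "prob_space (P s t x)" "sets (P s t x) = sets borel" "space (P s t x) = UNIV"
    "P s t \<in> borel \<rightarrow>\<^sub>M subprob_algebra borel"
proof -
  have "\<forall>s\<in>TT. \<forall>t\<in>TT. s \<le> t \<longrightarrow>
        (\<forall>x. prob_space (P s t x) \<and> sets (P s t x) = sets borel) \<and>
        (\<lambda>x. P s t x) \<in> borel \<rightarrow>\<^sub>M subprob_algebra borel"
    using assms(1) unfolding markov_transition_def by (elim conjE) assumption
  then have H: "(\<forall>x. prob_space (P s t x) \<and> sets (P s t x) = sets borel) \<and>
        P s t \<in> borel \<rightarrow>\<^sub>M subprob_algebra borel" using assms(2-4) by simp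
  then show "prob_space (P s t x)" "sets (P s t x) = sets borel"
    "P s t \<in> borel \<rightarrow>\<^sub>M subprob_algebra borel" by simp_all
  show "space (P s t x) = UNIV" using H sets_eq_imp_space_eq[of "P s t x" borel] by simp
qed

lemma evol_integrable:
  assumes "markov_transition TT P" "s\<in>TT" "t\<in>TT" "s\<le>t"
    and "h \<in> borel_measurable borel" "\<And>y. \<bar>h y\<bar> \<le> (B::real)"
  shows "integrable (P s t x) h"
proof -
  interpret prob_space "P s t x" using mt_prob[OF assms(1-4)] by simp
  have m: "h \<in> borel_measurable (P s t x)"
    using assms(5) measurable_cong_sets[OF mt_prob(2)[OF assms(1-4)] refl] by blast
  show ?thesis
    by (rule integrable_const_bound[where B=B, OF AE_I2 m]) (simp add: assms(6))
qed

lemma evol_bound: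
  assumes "markov_transition TT P" "s\<in>TT" "t\<in>TT" "s\<le>t"
    and "h \<in> borel_measurable borel" "\<And>y. \<bar>h y\<bar> \<le> B"
  shows "\<bar>evol P s t h x\<bar> \<le> B"
proof -
  interpret prob_space "P s t x" using mt_prob[OF assms(1-4)] by simp
  have i: "integrable (P s t x) h" by (rule evol_integrable[OF assms])
  have a1: "AE y in P s t x. h y \<le> B" using assms(6) by (intro AE_I2) (metis abs_le_D1)
  have a2: "AE y in P s t x. -B \<le> h y" using assms(6) by (intro AE_I2) (metis abs_le_D2 minus_le_iff)
  have "evol P s t h x \<le> B" unfolding evol_def by (rule integral_le_const[OF i a1])
  moreover have "-B \<le> evol P s t h x" unfolding evol_def by (rule integral_ge_const[OF i a2])
  ultimately show ?thesis by simp
qed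

lemma evol_nonneg:
  assumes "markov_transition TT P" "s\<in>TT" "t\<in>TT" "s\<le>t"
    and "\<And>y. h y \<ge> (0::real)"
  shows "evol P s t h x \<ge> 0"
  unfolding evol_def by (rule integral_nonneg_AE, rule AE_I2, rule assms(5))

lemma evol_lin:
  assumes "markov_transition TT P" "s\<in>TT" "t\<in>TT" "s\<le>t"
    and "f \<in> borel_measurable borel" "\<And>y. \<bar>f y\<bar> \<le> B"
    and "g \<in> borel_measurable borel" "\<And>y. \<bar>g y\<bar> \<le> C"
  shows "evol P s t (\<lambda>y. a * f y + b * g y) x = a * evol P s t f x + b * evol P s t g x"
proof -
  have i1: "integrable (P s t x) f" by (rule evol_integrable[OF assms(1-6)])
  have i2: "integrable (P s t x) g" by (rule evol_integrable[OF assms(1-4,7,8)])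
  show ?thesis unfolding evol_def using i1 i2 by simp
qed

lemma evol_diff:
  assumes "markov_transition TT P" "s\<in>TT" "t\<in>TT" "s\<le>t"
    and "f \<in> borel_measurable borel" "\<And>y. \<bar>f y\<bar> \<le> B"
    and "g \<in> borel_measurable borel" "\<And>y. \<bar>g y\<bar> \<le> C"
  shows "evol P s t f x - evol P s t g x = evol P s t (\<lambda>y. f y - g y) x"
proof -
  have i1: "integrable (P s t x) f" by (rule evol_integrable[OF assms(1-6)])
  have i2: "integrable (P s t x) g" by (rule evol_integrable[OF assms(1-4,7,8)])
  show ?thesis unfolding evol_def using i1 i2 by simp
qed

lemma evol_id:
  assumes "markov_transition TT P" "s\<in>TT" "h \<in> borel_measurable borel"
  shows "evol P s s h x = h x"
proof -
  have "\<forall>s\<in>TT. \<forall>x. P s s x = return borel x"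
    using assms(1) unfolding markov_transition_def by (elim conjE) assumption
  then have "P s s x = return borel x" using assms(2) by blast
  then show ?thesis unfolding evol_def using assms(3) by (simp add: integral_return)
qed

lemma evol_meas:
  assumes "markov_transition TT P" "s\<in>TT" "t\<in>TT" "s\<le>t"
    and "h \<in> borel_measurable borel"
  shows "evol P s t h \<in> borel_measurable borel"
proof -
  have "(\<lambda>x. integral\<^sup>L (P s t x) h) \<in> borel_measurable borel"
    using measurable_compose[OF mt_prob(4)[OF assms(1-4)] integral_measurable_subprob_algebra[OF assms(5)]] .
  then show ?thesis unfolding evol_def[abs_def] by simp
qed

lemma evol_CK:
  assumes "markov_transition TT P" "s\<in>TT" "r\<in>TT" "t\<in>TT" "s\<le>r" "r\<le>t"
    and "h \<in> borel_measurable borel" "\<And>y. \<bar>h y\<bar> \<le> B"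
  shows "evol P s t h x = evol P s r (evol P r t h) x"
proof -
  have "\<forall>s\<in>TT. \<forall>r\<in>TT. \<forall>t\<in>TT. s \<le> r \<longrightarrow> r \<le> t \<longrightarrow> (\<forall>x. P s t x = P s r x \<bind> (\<lambda>y. P r t y))"
    using assms(1) unfolding markov_transition_def by (elim conjE) assumption
  note CK = this
  have eq: "P s t x = P s r x \<bind> P r t" by (rule CK[rule_format, OF assms(2,3,4,5,6)])
  have st: "s \<le> t" using assms(5,6) by linarith
  interpret prob_space "P s r x" using mt_prob[OF assms(1,2,3,5)] by simp
  have "integral\<^sup>L (P s r x \<bind> P r t) h = \<integral> y. integral\<^sup>L (P r t y) h \<partial>(P s r x)"
  proof (rule integral_bind[where K=borel and B=B and B'=1])
    show "h \<in> borel_measurable borel" by fact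
    show "\<bar>h y\<bar> \<le> B" for y by fact
    show "P r t \<in> P s r x \<rightarrow>\<^sub>M subprob_algebra borel"
      by (subst measurable_cong_sets[OF mt_prob(2)[OF assms(1,2,3,5)] refl]) (rule mt_prob(4)[OF assms(1,3,4,6)])
    show "finite_measure (P s r x)" by (rule finite_measure_axioms)
    show "AE y in P s r x. emeasure (P r t y) (space (P r t y)) \<le> ennreal 1"
      by (rule AE_I2) (simp add: prob_space.emeasure_space_1[OF mt_prob(1)[OF assms(1,3,4,6)]])
  qed
  then show ?thesis unfolding evol_def[abs_def] eq by (rule HOL.trans) (rule refl)
qed


lemma supnorm_ge:
  assumes "bdd_above ((\<lambda>z. \<bar>h z\<bar>) ` S)" "z \<in> S"
  shows "\<bar>h z\<bar> \<le> supnorm S h"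
  unfolding supnorm_def using assms by (rule cSUP_upper2[OF _ _ order_refl]) 

lemma supnorm_le:
  assumes "S \<noteq> {}" "\<And>z. z\<in>S \<Longrightarrow> \<bar>h z\<bar> \<le> c"
  shows "supnorm S h \<le> c"
  unfolding supnorm_def using assms by (intro cSUP_least) auto

lemma tendsto_supnormI:
  assumes "S \<noteq> {}" "\<And>e. e > 0 \<Longrightarrow> eventually (\<lambda>p. \<forall>z\<in>S. \<bar>F p z\<bar> \<le> e) G"
  shows "((\<lambda>p. supnorm S (F p)) \<longlongrightarrow> 0) G"
proof (rule tendstoI)
  fix e :: real assume e: "e > 0"
  from assms(1) obtain z0 where z0: "z0 \<in> S" by auto
  show "eventually (\<lambda>p. dist (supnorm S (F p)) 0 < e) G"
    using assms(2)[of "e/2"] e half_gt_zero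
  proof (rule_tac eventually_mono[rotated])
    fix p assume H: "\<forall>z\<in>S. \<bar>F p z\<bar> \<le> e / 2"
    have bd: "bdd_above ((\<lambda>z. \<bar>F p z\<bar>) ` S)" using H by (intro bdd_aboveI2[where M="e/2"]) auto
    have "0 \<le> supnorm S (F p)" using supnorm_ge[OF bd z0] by linarith
    moreover have "supnorm S (F p) \<le> e/2" using supnorm_le[OF assms(1)] H by blast
    ultimately show "dist (supnorm S (F p)) 0 < e" using e by simp
  qed simp
qed

lemma tendsto_supnormD:
  assumes "((\<lambda>p. supnorm S (F p)) \<longlongrightarrow> 0) G"
    and "eventually (\<lambda>p. bdd_above ((\<lambda>z. \<bar>F p z\<bar>) ` S)) G" and "e > 0"
  shows "eventually (\<lambda>p. \<forall>z\<in>S. \<bar>F p z\<bar> < e) G"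
proof -
  have "eventually (\<lambda>p. dist (supnorm S (F p)) 0 < e) G"
    using assms(1,3) tendstoD by blast
  with assms(2) show ?thesis
  proof (rule eventually_elim2)
    fix p assume bd: "bdd_above ((\<lambda>z. \<bar>F p z\<bar>) ` S)" and d: "dist (supnorm S (F p)) 0 < e"
    show "\<forall>z\<in>S. \<bar>F p z\<bar> < e"
      using supnorm_ge[OF bd] d by fastforce
  qed
qed

lemma Cinf_bdd:
  assumes "f \<in> C_inf S"
  shows "\<exists>B. \<forall>z\<in>S. \<bar>f z\<bar> \<le> B"
proof -
  have H: "\<forall>e>0. \<exists>K. compact K \<and> K \<subseteq> S \<and> (\<forall>x\<in>S - K. \<bar>f x\<bar> < e)"
    and c: "continuous_on S f" using assms unfolding C_inf_def by simp_all
  obtain K where K: "compact K" "K \<subseteq> S" "\<forall>x\<in>S - K. \<bar>f x\<bar> < 1"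
    using H zero_less_one by blast
  have "continuous_on K f" using c K(2) by (rule continuous_on_subset)
  then have "compact (f ` K)" using K(1) by (rule compact_continuous_image)
  then have "bounded (f ` K)" by (rule compact_imp_bounded)
  then obtain B where B0: "\<forall>y\<in>f ` K. \<bar>y\<bar> \<le> B" unfolding bounded_real by blast
  have B: "\<forall>z\<in>K. \<bar>f z\<bar> \<le> B" using B0 by simp
  show ?thesis
  proof (intro exI[of _ "max B 1"] ballI)
    fix z assume z: "z \<in> S"
    show "\<bar>f z\<bar> \<le> max B 1"
    proof (cases "z \<in> K")
      case True
      then have "\<bar>f z\<bar> \<le> B" using B by blast
      then show ?thesis by linarith
    next
      case False
      then have "\<bar>f z\<bar> < 1" using K(3) z by blast
      then show ?thesis by linarith
    qed
  qed
qed

lemma Cinf_bdd_above: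
  assumes "f \<in> C_inf S"
  shows "bdd_above ((\<lambda>z. \<bar>f z\<bar>) ` S)"
  using Cinf_bdd[OF assms] by (auto intro: bdd_aboveI2)

lemma Cinf_slice:
  fixes f :: "real \<times> 'a::euclidean_space \<Rightarrow> real"
  assumes "f \<in> C_inf (TT \<times> UNIV)" "r \<in> TT"
  shows "(\<lambda>y. f (r, y)) \<in> C_inf UNIV"
proof -
  have c: "continuous_on (TT \<times> UNIV) f" using assms unfolding C_inf_def by auto
  have "continuous_on UNIV (\<lambda>y. f (r, y))"
    by (rule continuous_on_compose2[OF c]) (use assms(2) in \<open>auto intro!: continuous_intros\<close>)
  moreover have "\<exists>K. compact K \<and> K \<subseteq> UNIV \<and> (\<forall>x\<in>UNIV - K. \<bar>f (r, x)\<bar> < e)" if e: "e > 0" for e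
  proof -
    obtain K where K: "compact K" "K \<subseteq> TT \<times> UNIV" "\<forall>x\<in>TT \<times> UNIV - K. \<bar>f x\<bar> < e"
      using assms e unfolding C_inf_def by auto
    have "compact (K \<inter> ({r} \<times> UNIV))"
      using K(1) by (intro compact_Int_closed closed_Times) auto
    then have "compact (snd ` (K \<inter> ({r} \<times> UNIV)))"
      by (rule compact_continuous_image[rotated]) (intro continuous_intros)
    moreover have "\<bar>f (r, x)\<bar> < e" if "x \<notin> snd ` (K \<inter> ({r} \<times> UNIV))" for x
      using that K(3) assms(2) by (metis DiffI IntI SigmaI UNIV_I insertI1 snd_conv image_eqI)
    ultimately show ?thesis by blast
  qed
  ultimately show ?thesis unfolding C_inf_def by auto
qed

lemma Cinf_ucont:
  fixes f :: "'a::euclidean_space \<Rightarrow> real"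
  assumes "closed S" "f \<in> C_inf S" "e > 0"
  shows "\<exists>d>0. \<forall>z\<in>S. \<forall>z'\<in>S. dist z z' < d \<longrightarrow> \<bar>f z - f z'\<bar> < e"
proof -
  have H: "\<forall>e>0. \<exists>K. compact K \<and> K \<subseteq> S \<and> (\<forall>x\<in>S - K. \<bar>f x\<bar> < e)"
    and c: "continuous_on S f" using assms(2) unfolding C_inf_def by simp_all
  have e2: "e/2 > 0" using assms(3) by simp
  obtain K where K: "compact K" "K \<subseteq> S" "\<forall>x\<in>S - K. \<bar>f x\<bar> < e/2"
    using H e2 by blast
  have "bounded K" using K(1) by (rule compact_imp_bounded)
  then obtain R where R: "\<forall>z\<in>K. norm z \<le> R" unfolding bounded_iff by blast
  define K' where "K' = S \<inter> cball 0 (R+1)"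
  have cK': "compact K'" unfolding K'_def using assms(1)
    by (simp add: compact_eq_bounded_closed closed_Int bounded_Int)
  have "continuous_on K' f" using c unfolding K'_def
    by (rule continuous_on_subset) simp
  then have "uniformly_continuous_on K' f" using cK' by (rule compact_uniformly_continuous)
  then obtain d where d: "d > 0" "\<forall>x\<in>K'. \<forall>x'\<in>K'. dist x' x < d \<longrightarrow> dist (f x') (f x) < e"
    unfolding uniformly_continuous_on_def using assms(3) by blast
  show ?thesis
  proof (intro exI[of _ "min d 1"] conjI ballI impI)
    show "min d 1 > 0" using d by simp
    fix z z' assume z: "z \<in> S" "z' \<in> S" "dist z z' < min d 1"
    show "\<bar>f z - f z'\<bar> < e"
    proof (cases "z \<in> K \<or> z' \<in> K")
      case True
      have n1: "norm z \<le> norm z' + dist z z'" "norm z' \<le> norm z + dist z z'"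
        using norm_triangle_ineq2[of z z'] norm_triangle_ineq2[of z' z]
        by (auto simp: dist_norm norm_minus_commute)
      have "norm z \<le> R \<or> norm z' \<le> R" using True R by blast
      then have "norm z \<le> R + 1 \<and> norm z' \<le> R + 1" using n1 z(3) by linarith
      then have "z \<in> K'" "z' \<in> K'" using z unfolding K'_def by auto
      then have "dist (f z) (f z') < e" using d z(3) by auto
      then show ?thesis by (simp add: dist_real_def)
    next
      case False
      then have "\<bar>f z\<bar> < e/2" "\<bar>f z'\<bar> < e/2" using K(3) z by blast+
      then show ?thesis by linarith
    qed
  qed
qed

lemma compact_unif_vanish:
  fixes F :: "'a::metric_space \<Rightarrow> 'b::topological_space \<Rightarrow> real"
  assumes "compact A"
    and cont: "\<And>a0 e. a0 \<in> A \<Longrightarrow> e > 0 \<Longrightarrow> \<exists>d>0. \<forall>a\<in>A. dist a a0 < d \<longrightarrow> (\<forall>x. \<bar>F a x - F a0 x\<bar> \<le> e)"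
    and van: "\<And>a e. a \<in> A \<Longrightarrow> e > 0 \<Longrightarrow> \<exists>K. compact K \<and> (\<forall>x. x \<notin> K \<longrightarrow> \<bar>F a x\<bar> < e)"
    and e: "e > 0"
  shows "\<exists>K. compact K \<and> (\<forall>a\<in>A. \<forall>x. x \<notin> K \<longrightarrow> \<bar>F a x\<bar> < e)"
proof -
  have "\<forall>a0\<in>A. \<exists>d. d > 0 \<and> (\<forall>a\<in>A. dist a a0 < d \<longrightarrow> (\<forall>x. \<bar>F a x - F a0 x\<bar> \<le> e/2))"
    using cont e by (meson half_gt_zero)
  then obtain dl where dl: "\<And>a0. a0\<in>A \<Longrightarrow> dl a0 > 0 \<and> (\<forall>a\<in>A. dist a a0 < dl a0 \<longrightarrow> (\<forall>x. \<bar>F a x - F a0 x\<bar> \<le> e/2))"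
    by metis
  have "\<forall>a0\<in>A. \<exists>K. compact K \<and> (\<forall>x. x \<notin> K \<longrightarrow> \<bar>F a0 x\<bar> < e/2)"
    using van e by (meson half_gt_zero)
  then obtain Kl where Kl: "\<And>a0. a0\<in>A \<Longrightarrow> compact (Kl a0) \<and> (\<forall>x. x \<notin> Kl a0 \<longrightarrow> \<bar>F a0 x\<bar> < e/2)"
    by metis
  obtain C where C: "C \<subseteq> A" "finite C" "A \<subseteq> (\<Union>c\<in>C. ball c (dl c))"
  proof (rule compactE_image[OF assms(1), of A "\<lambda>c. ball c (dl c)"])
    show "A \<subseteq> (\<Union>c\<in>A. ball c (dl c))" using dl by force
  qed auto
  show ?thesis
  proof (intro exI[of _ "\<Union>c\<in>C. Kl c"] conjI ballI allI impI)
    show "compact (\<Union>c\<in>C. Kl c)" using C Kl by (intro compact_UN) auto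
    fix a x assume a: "a \<in> A" and x: "x \<notin> (\<Union>c\<in>C. Kl c)"
    obtain c where c: "c \<in> C" "dist c a < dl c" using C(3) a by auto
    have "\<bar>F a x - F c x\<bar> \<le> e/2" using dl[of c] c C(1) a by (auto simp: dist_commute)
    moreover have "\<bar>F c x\<bar> < e/2" using Kl[of c] c C(1) x by auto
    ultimately show "\<bar>F a x\<bar> < e" by linarith
  qed
qed

lemma compact_unif_cont:
  fixes F :: "'a::metric_space \<Rightarrow> 'b \<Rightarrow> real"
  assumes "compact A"
    and cont: "\<And>a0 e. a0 \<in> A \<Longrightarrow> e > 0 \<Longrightarrow> \<exists>d>0. \<forall>a\<in>A. dist a a0 < d \<longrightarrow> (\<forall>x. \<bar>F a x - F a0 x\<bar> \<le> e)"
    and e: "e > 0"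
  shows "\<exists>d>0. \<forall>a\<in>A. \<forall>a'\<in>A. dist a a' < d \<longrightarrow> (\<forall>x. \<bar>F a x - F a' x\<bar> \<le> e)"
proof -
  have "\<forall>a0\<in>A. \<exists>d. d > 0 \<and> (\<forall>a\<in>A. dist a a0 < d \<longrightarrow> (\<forall>x. \<bar>F a x - F a0 x\<bar> \<le> e/2))"
    using cont e by (meson half_gt_zero)
  then obtain dl where dl: "\<And>a0. a0\<in>A \<Longrightarrow> dl a0 > 0 \<and> (\<forall>a\<in>A. dist a a0 < dl a0 \<longrightarrow> (\<forall>x. \<bar>F a x - F a0 x\<bar> \<le> e/2))"
    by metis
  obtain eps where eps: "eps > 0" "\<And>x. x \<in> A \<Longrightarrow> \<exists>G \<in> (\<lambda>c. ball c (dl c)) ` A. ball x eps \<subseteq> G"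
    by (rule Heine_Borel_lemma[OF assms(1), of "(\<lambda>c. ball c (dl c)) ` A"]) (use dl in force)+
  show ?thesis
  proof (intro exI[of _ eps] conjI ballI allI impI)
    fix a a' x assume a: "a \<in> A" "a' \<in> A" "dist a a' < eps"
    obtain c where c: "c \<in> A" "ball a eps \<subseteq> ball c (dl c)" using eps(2)[OF a(1)] by auto
    have "a \<in> ball c (dl c)" "a' \<in> ball c (dl c)" using c(2) a(3) eps(1) by (auto simp: subset_iff)
    then have "\<bar>F a x - F c x\<bar> \<le> e/2" "\<bar>F a' x - F c x\<bar> \<le> e/2"
      using dl[OF c(1)] a by (auto simp: dist_commute)
    then show "\<bar>F a x - F a' x\<bar> \<le> e" by linarith
  qed (use eps in auto)
qed


lemma Cinf_meas: "f \<in> C_inf UNIV \<Longrightarrow> f \<in> borel_measurable borel"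
  unfolding C_inf_def by (auto intro: borel_measurable_continuous_onI)

lemma Cinf_UNIV_bound: "f \<in> C_inf UNIV \<Longrightarrow> \<exists>B. \<forall>y. \<bar>f y\<bar> \<le> B"
  using Cinf_bdd[of f UNIV] by auto

lemma Cinf_supnorm: "f \<in> C_inf UNIV \<Longrightarrow> \<bar>f y\<bar> \<le> supnorm UNIV f"
  using supnorm_ge[OF Cinf_bdd_above] by blast

context
  fixes TT :: "real set" and P :: "real \<Rightarrow> real \<Rightarrow> real^'d \<Rightarrow> (real^'d) measure"
  assumes ts: "time_set TT" and mt: "markov_transition TT P"
begin

lemma TT_add: "s \<in> TT \<Longrightarrow> 0 \<le> t \<Longrightarrow> s + t \<in> TT"
  using ts unfolding time_set_def by auto

lemma TT_closed: "closed TT"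
  using ts unfolding time_set_def by auto

lemma TT_ne: "TT \<noteq> {}"
  using ts unfolding time_set_def by auto

lemma TT_compact: "compact (TT \<inter> {a..b})"
  using TT_closed by (metis compact_Int_closed compact_Icc Int_commute)

lemma S_closed: "closed (TT \<times> (UNIV :: (real^'d) set))"
  using TT_closed by (intro closed_Times) auto

lemma S_ne: "TT \<times> (UNIV :: (real^'d) set) \<noteq> {}"
  using TT_ne by auto

lemma feller_evolutionI:
  assumes map: "\<And>s t f. s \<in> TT \<Longrightarrow> t \<in> TT \<Longrightarrow> s \<le> t \<Longrightarrow> f \<in> C_inf UNIV \<Longrightarrow> evol P s t f \<in> C_inf UNIV"
    and sc: "\<And>v w f. v \<in> TT \<Longrightarrow> w \<in> TT \<Longrightarrow> v \<le> w \<Longrightarrow> f \<in> C_inf UNIV \<Longrightarrow>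
        ((\<lambda>(s, t). supnorm UNIV (\<lambda>x. evol P s t f x - evol P v w f x)) \<longlongrightarrow> 0)
          (at (v, w) within {(s, t). s \<in> TT \<and> t \<in> TT \<and> s \<le> t})"
  shows "feller_evolution TT (evol P)"
  unfolding feller_evolution_def
proof (intro conjI ballI impI allI)
  fix s t assume st: "s \<in> TT" "t \<in> TT" "s \<le> t"
  fix f :: "real^'d \<Rightarrow> real" assume f: "f \<in> C_inf UNIV"
  obtain B where B: "\<And>y. \<bar>f y\<bar> \<le> B" using Cinf_UNIV_bound[OF f] by blast
  show "evol P s t f \<in> C_inf UNIV" by (rule map[OF st f])
  show "supnorm UNIV (evol P s t f) \<le> supnorm UNIV f"
    by (rule supnorm_le) (auto intro!: evol_bound[OF mt st Cinf_meas[OF f]] Cinf_supnorm[OF f])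
  show "0 \<le> evol P s t f x" if "\<forall>x. 0 \<le> f x" for x
    using evol_nonneg[OF mt st, of f] that by auto
  fix g :: "real^'d \<Rightarrow> real" and a b assume g: "g \<in> C_inf UNIV"
  obtain C where C: "\<And>y. \<bar>g y\<bar> \<le> C" using Cinf_UNIV_bound[OF g] by blast
  show "evol P s t (\<lambda>x. a * f x + b * g x) = (\<lambda>x. a * evol P s t f x + b * evol P s t g x)"
    using evol_lin[OF mt st Cinf_meas[OF f] B Cinf_meas[OF g] C] by auto
next
  fix s and f :: "real^'d \<Rightarrow> real" assume s: "s \<in> TT" and f: "f \<in> C_inf UNIV"
  show "evol P s s f = f" using evol_id[OF mt s Cinf_meas[OF f]] by auto
next
  fix s r t and f :: "real^'d \<Rightarrow> real" assume st: "s \<in> TT" "r \<in> TT" "t \<in> TT" "s \<le> r" "r \<le> t" and f: "f \<in> C_inf UNIV"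
  obtain B where B: "\<And>y. \<bar>f y\<bar> \<le> B" using Cinf_UNIV_bound[OF f] by blast
  show "evol P s t f = evol P s r (evol P r t f)"
    using evol_CK[OF mt st Cinf_meas[OF f] B] by auto
next
  fix v w and f :: "real^'d \<Rightarrow> real" assume "v \<in> TT" "w \<in> TT" "v \<le> w" "f \<in> C_inf UNIV"
  then show "((\<lambda>(s, t). supnorm UNIV (\<lambda>x. evol P s t f x - evol P v w f x)) \<longlongrightarrow> 0)
          (at (v, w) within {(s, t). s \<in> TT \<and> t \<in> TT \<and> s \<le> t})" by (rule sc)
qed

lemma sg_pair: "spacetime_sg P t f (s, x) = evol P s (s + t) (\<lambda>y. f (s + t, y)) x"
  by (simp add: spacetime_sg_def)

lemma slice_props:
  assumes "f \<in> C_inf (TT \<times> (UNIV :: (real^'d) set))" "r \<in> TT"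
  shows "(\<lambda>y. f (r, y)) \<in> borel_measurable borel" "\<bar>f (r, y)\<bar> \<le> supnorm (TT \<times> UNIV) f"
  using Cinf_meas[OF Cinf_slice[OF assms]] apply simp
  using supnorm_ge[OF Cinf_bdd_above[OF assms(1)]] assms(2) by simp

lemma feller_semigroupI:
  assumes map: "\<And>t f. t \<ge> 0 \<Longrightarrow> f \<in> C_inf (TT \<times> UNIV) \<Longrightarrow> spacetime_sg P t f \<in> C_inf (TT \<times> UNIV)"
    and sc: "\<And>f t. f \<in> C_inf (TT \<times> UNIV) \<Longrightarrow> t \<ge> 0 \<Longrightarrow>
        ((\<lambda>r. supnorm (TT \<times> UNIV) (\<lambda>z. spacetime_sg P r f z - spacetime_sg P t f z)) \<longlongrightarrow> 0) (at t within {0..})"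
  shows "feller_semigroup (TT \<times> (UNIV :: (real^'d) set)) (spacetime_sg P)"
  unfolding feller_semigroup_def
proof (intro conjI ballI impI allI)
  fix t :: real assume t: "t \<ge> 0"
  fix f assume f: "f \<in> C_inf (TT \<times> (UNIV :: (real^'d) set))"
  show "spacetime_sg P t f \<in> C_inf (TT \<times> UNIV)" by (rule map[OF t f])
  have st: "s \<in> TT \<Longrightarrow> s + t \<in> TT" "s \<le> s + t" for s using TT_add t by auto
  show "supnorm (TT \<times> UNIV) (spacetime_sg P t f) \<le> supnorm (TT \<times> UNIV) f"
  proof (rule supnorm_le[OF S_ne])
    fix z :: "real \<times> (real^'d)" assume z: "z \<in> TT \<times> UNIV"
    then obtain s x where zz: "z = (s, x)" "s \<in> TT" by auto
    show "\<bar>spacetime_sg P t f z\<bar> \<le> supnorm (TT \<times> UNIV) f"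
      unfolding zz sg_pair
      by (rule evol_bound[OF mt zz(2) st(1)[OF zz(2)] st(2) slice_props(1)[OF f st(1)[OF zz(2)]]
            slice_props(2)[OF f st(1)[OF zz(2)]]])
  qed
  show "0 \<le> spacetime_sg P t f z" if H: "\<forall>z\<in>TT \<times> UNIV. 0 \<le> f z" and Z: "z \<in> TT \<times> UNIV" for z
  proof -
    obtain s x where zz: "z = (s, x)" "s \<in> TT" using Z by auto
    show ?thesis unfolding zz sg_pair
      by (rule evol_nonneg[OF mt zz(2) st(1)[OF zz(2)] st(2)]) (use H st(1)[OF zz(2)] in auto)
  qed
  fix g a b and z :: "real \<times> (real^'d)" assume g: "g \<in> C_inf (TT \<times> (UNIV :: (real^'d) set))" and z: "z \<in> TT \<times> UNIV"
  obtain s x where zz: "z = (s, x)" "s \<in> TT" using z by auto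
  show "spacetime_sg P t (\<lambda>x. a * f x + b * g x) z = a * spacetime_sg P t f z + b * spacetime_sg P t g z"
    unfolding zz sg_pair
    by (rule evol_lin[OF mt zz(2) st(1)[OF zz(2)] st(2) slice_props(1)[OF f st(1)[OF zz(2)]]
            slice_props(2)[OF f st(1)[OF zz(2)]] slice_props(1)[OF g st(1)[OF zz(2)]]
            slice_props(2)[OF g st(1)[OF zz(2)]]])
next
  fix f and z :: "real \<times> (real^'d)" assume f: "f \<in> C_inf (TT \<times> (UNIV :: (real^'d) set))" and z: "z \<in> TT \<times> UNIV"
  obtain s x where zz: "z = (s, x)" "s \<in> TT" using z by auto
  show "spacetime_sg P 0 f z = f z"
    unfolding zz sg_pair using evol_id[OF mt zz(2) slice_props(1)[OF f zz(2)]] by simp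
next
  fix t1 t2 :: real and f and z :: "real \<times> (real^'d)" assume t: "t1 \<ge> 0" "t2 \<ge> 0"
    and f: "f \<in> C_inf (TT \<times> (UNIV :: (real^'d) set))" and z: "z \<in> TT \<times> UNIV"
  obtain s x where zz: "z = (s, x)" "s \<in> TT" using z by auto
  have r: "s + t1 \<in> TT" and tt: "s + t1 + t2 \<in> TT" using TT_add zz t by auto
  have eq: "s + (t1 + t2) = s + t1 + t2" by simp
  show "spacetime_sg P (t1 + t2) f z = spacetime_sg P t1 (spacetime_sg P t2 f) z"
    unfolding zz sg_pair eq
    using evol_CK[OF mt zz(2) r tt _ _ slice_props(1)[OF f tt] slice_props(2)[OF f tt]] t
    by simp
next
  fix f t assume "f \<in> C_inf (TT \<times> (UNIV :: (real^'d) set))" "t \<ge> (0::real)"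
  then show "((\<lambda>r. supnorm (TT \<times> UNIV) (\<lambda>z. spacetime_sg P r f z - spacetime_sg P t f z)) \<longlongrightarrow> 0) (at t within {0..})"
    by (rule sc)
qed

end


definition phi :: "real \<Rightarrow> real \<Rightarrow> real" where "phi w r = min 1 (max 0 (2 - \<bar>r - w\<bar>))"
definition Gf :: "real \<Rightarrow> ('a \<Rightarrow> real) \<Rightarrow> real \<times> 'a \<Rightarrow> real" where
  "Gf w f z = phi w (fst z) * f (snd z)"

lemma phi_01: "0 \<le> phi w r" "phi w r \<le> 1" unfolding phi_def by auto
lemma phi_1: "\<bar>r - w\<bar> \<le> 1 \<Longrightarrow> phi w r = 1" unfolding phi_def by auto
lemma phi_0: "r \<notin> {w-2..w+2} \<Longrightarrow> phi w r = 0" unfolding phi_def by auto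
lemma phi_cont: "continuous_on UNIV (phi w)" unfolding phi_def[abs_def] by (intro continuous_intros)

lemma dist_pair_le: "dist (a, b) (c, d) \<le> dist a c + dist b d"
  unfolding dist_Pair_Pair using sqrt_sum_squares_le_sum_abs[of "dist a c" "dist b d"] by simp

lemma dist_pair_same: "dist (a, x) (c, x) = dist a c"
  unfolding dist_Pair_Pair by simp

lemma bdd_diff:
  assumes "f \<in> C_inf S" "g \<in> C_inf S"
  shows "bdd_above ((\<lambda>z. \<bar>f z - g z\<bar>) ` S)"
proof -
  obtain B where B: "\<forall>z\<in>S. \<bar>f z\<bar> \<le> B" using Cinf_bdd[OF assms(1)] by blast
  obtain C where C: "\<forall>z\<in>S. \<bar>g z\<bar> \<le> C" using Cinf_bdd[OF assms(2)] by blast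
  show ?thesis
  proof (rule bdd_aboveI2[where M="B + C"])
    fix z assume "z \<in> S"
    then have "\<bar>f z\<bar> \<le> B" "\<bar>g z\<bar> \<le> C" using B C by blast+
    then show "\<bar>f z - g z\<bar> \<le> B + C" by linarith
  qed
qed

lemma FS_map:
  assumes H: "feller_semigroup S T" and t: "t \<ge> 0" and f: "f \<in> C_inf S"
  shows "T t f \<in> C_inf S"
  by (rule bspec[OF conjunct1[OF mp[OF spec[OF conjunct1[OF H[unfolded feller_semigroup_def]], of t] t]] f])

lemma FS_sc:
  assumes H: "feller_semigroup S T" and t: "t \<ge> 0" and f: "f \<in> C_inf S"
  shows "((\<lambda>r. supnorm S (\<lambda>z. T r f z - T t f z)) \<longlongrightarrow> 0) (at t within {0..})"
  by (rule mp[OF spec[OF bspec[OF conjunct2[OF conjunct2[OF conjunct2[OF H[unfolded feller_semigroup_def]]]] f], of t] t])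

context
  fixes TT :: "real set" and P :: "real \<Rightarrow> real \<Rightarrow> real^'d \<Rightarrow> (real^'d) measure"
  assumes ts: "time_set TT" and mt: "markov_transition TT P"
begin

lemma G_Cinf:
  fixes f :: "real^'d \<Rightarrow> real"
  assumes f: "f \<in> C_inf UNIV"
  shows "Gf w f \<in> C_inf (TT \<times> UNIV)"
proof -
  have cf: "continuous_on UNIV f" using f unfolding C_inf_def by simp
  have "continuous_on (TT \<times> UNIV) (\<lambda>z. phi w (fst z) * f (snd z))"
    by (intro continuous_intros continuous_on_compose2[OF phi_cont] continuous_on_compose2[OF cf]) auto
  then have c: "continuous_on (TT \<times> UNIV) (Gf w f)" unfolding Gf_def[abs_def] by simp
  have "\<exists>K. compact K \<and> K \<subseteq> TT \<times> UNIV \<and> (\<forall>z\<in>TT \<times> UNIV - K. \<bar>Gf w f z\<bar> < e)" if e: "e > 0" for e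
  proof -
    have "\<forall>e>0. \<exists>K. compact K \<and> K \<subseteq> UNIV \<and> (\<forall>x\<in>UNIV - K. \<bar>f x\<bar> < e)"
      using f unfolding C_inf_def by simp
    then obtain Kf where Kf: "compact Kf" "\<forall>x\<in>UNIV - Kf. \<bar>f x\<bar> < e" using e by blast
    define K where "K = (TT \<inter> {w-2..w+2}) \<times> Kf"
    have "compact K" unfolding K_def by (intro compact_Times TT_compact[OF ts mt] Kf(1))
    moreover have "K \<subseteq> TT \<times> UNIV" unfolding K_def by auto
    moreover have "\<bar>Gf w f z\<bar> < e" if z: "z \<in> TT \<times> UNIV - K" for z
    proof (cases "fst z \<in> {w-2..w+2}")
      case True
      then have "snd z \<notin> Kf" using z unfolding K_def by (cases z) auto
      then have "\<bar>f (snd z)\<bar> < e" using Kf(2) by blast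
      moreover have "\<bar>phi w (fst z)\<bar> \<le> 1" using phi_01 by simp
      ultimately have "\<bar>phi w (fst z)\<bar> * \<bar>f (snd z)\<bar> < e"
        by (metis abs_ge_zero dual_order.strict_trans2 mult_left_le_one_le)
      then show ?thesis unfolding Gf_def by (simp add: abs_mult)
    next
      case False
      then show ?thesis unfolding Gf_def using phi_0 e by simp
    qed
    ultimately show ?thesis by blast
  qed
  then show ?thesis using c unfolding C_inf_def by simp
qed

lemma T_G:
  assumes "s \<in> TT" "t \<in> TT" "s \<le> t" "\<bar>t - w\<bar> \<le> 1"
  shows "spacetime_sg P (t - s) (Gf w f) (s, x) = evol P s t f x"
proof -
  have "phi w t = 1" using phi_1 assms(4) by simp
  then show ?thesis unfolding spacetime_sg_def Gf_def by simp
qed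

lemma B_map:
  fixes f :: "real^'d \<Rightarrow> real"
  assumes FS: "feller_semigroup (TT \<times> (UNIV :: (real^'d) set)) (spacetime_sg P)"
    and st: "s \<in> TT" "t \<in> TT" "s \<le> t" and f: "f \<in> C_inf UNIV"
  shows "evol P s t f \<in> C_inf UNIV"
proof -
  have "spacetime_sg P (t - s) (Gf t f) \<in> C_inf (TT \<times> UNIV)"
    using FS_map[OF FS _ G_Cinf[OF f]] st by simp
  then have "(\<lambda>x. spacetime_sg P (t - s) (Gf t f) (s, x)) \<in> C_inf UNIV"
    using Cinf_slice st(1) by blast
  moreover have "(\<lambda>x. spacetime_sg P (t - s) (Gf t f) (s, x)) = evol P s t f"
    using T_G[OF st] by auto
  ultimately show ?thesis by simp
qed

lemma B_sc:
  fixes f :: "real^'d \<Rightarrow> real"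
  assumes FS: "feller_semigroup (TT \<times> (UNIV :: (real^'d) set)) (spacetime_sg P)"
    and vw: "v \<in> TT" "w \<in> TT" "v \<le> w" and f: "f \<in> C_inf UNIV"
  shows "((\<lambda>(s, t). supnorm UNIV (\<lambda>x. evol P s t f x - evol P v w f x)) \<longlongrightarrow> 0)
          (at (v, w) within {(s, t). s \<in> TT \<and> t \<in> TT \<and> s \<le> t})"
proof -
  define S where "S = TT \<times> (UNIV :: (real^'d) set)"
  define G where "G = Gf w f"
  define h0 where "h0 = spacetime_sg P (w - v) G"
  have GC: "G \<in> C_inf S" unfolding G_def S_def by (rule G_Cinf[OF f])
  have h0C: "h0 \<in> C_inf S" unfolding h0_def using FS_map[OF FS[folded S_def] _ GC] vw by simp
  have eq: "(\<lambda>(s, t). supnorm UNIV (\<lambda>x. evol P s t f x - evol P v w f x)) =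
      (\<lambda>p. supnorm UNIV (\<lambda>x. evol P (fst p) (snd p) f x - evol P v w f x))"
    by (simp add: case_prod_beta')
  show ?thesis unfolding eq
  proof (rule tendsto_supnormI)
    fix e :: real assume e: "e > 0"
    have "((\<lambda>r. supnorm S (\<lambda>z. spacetime_sg P r G z - h0 z)) \<longlongrightarrow> 0) (at (w - v) within {0..})"
      unfolding h0_def using FS_sc[OF FS[folded S_def] _ GC] vw by simp
    moreover have "eventually (\<lambda>r. bdd_above ((\<lambda>z. \<bar>spacetime_sg P r G z - h0 z\<bar>) ` S)) (at (w - v) within {0..})"
      unfolding eventually_at
      by (rule exI[of _ 1]) (auto intro!: bdd_diff h0C FS_map[OF FS[folded S_def] _ GC])
    ultimately have "eventually (\<lambda>r. \<forall>z\<in>S. \<bar>spacetime_sg P r G z - h0 z\<bar> < e/2) (at (w - v) within {0..})"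
      using e by (intro tendsto_supnormD) auto
    then obtain d1 where d1: "d1 > 0" "\<forall>r\<in>{0..}. r \<noteq> w - v \<and> dist r (w - v) < d1 \<longrightarrow>
        (\<forall>z\<in>S. \<bar>spacetime_sg P r G z - h0 z\<bar> < e/2)"
      unfolding eventually_at by blast
    obtain d2 where d2: "d2 > 0" "\<forall>z\<in>S. \<forall>z'\<in>S. dist z z' < d2 \<longrightarrow> \<bar>h0 z - h0 z'\<bar> < e/2"
      using Cinf_ucont[OF S_closed[OF ts mt, folded S_def] h0C, of "e/2"] e by auto
    show "eventually (\<lambda>p. \<forall>x\<in>UNIV. \<bar>evol P (fst p) (snd p) f x - evol P v w f x\<bar> \<le> e)
       (at (v, w) within {(s, t). s \<in> TT \<and> t \<in> TT \<and> s \<le> t})"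
      unfolding eventually_at
    proof (intro exI[of _ "min 1 (min (d1/2) d2)"] conjI ballI impI)
      show "min 1 (min (d1/2) d2) > 0" using d1 d2 by simp
      fix p x assume p: "p \<in> {(s, t). s \<in> TT \<and> t \<in> TT \<and> s \<le> t}" "p \<noteq> (v, w) \<and> dist p (v, w) < min 1 (min (d1/2) d2)"
      obtain s t where pst: "p = (s, t)" by (cases p)
      have st: "s \<in> TT" "t \<in> TT" "s \<le> t" using p(1) pst by auto
      have ds: "dist s v < min 1 (min (d1/2) d2)" "dist t w < min 1 (min (d1/2) d2)"
        using p(2) dist_fst_le[of p "(v,w)"] dist_snd_le[of p "(v,w)"] pst by auto
      have e1: "evol P s t f x = spacetime_sg P (t - s) G (s, x)"
        unfolding G_def using T_G[OF st] ds by (simp add: dist_real_def)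
      have e2: "evol P v w f x = h0 (v, x)"
        unfolding G_def h0_def using T_G[OF vw] by simp
      have A: "\<bar>spacetime_sg P (t - s) G (s, x) - h0 (s, x)\<bar> \<le> e/2"
      proof (cases "t - s = w - v")
        case True then show ?thesis unfolding h0_def using e by simp
      next
        case False
        have a: "\<bar>s - v\<bar> < d1/2" "\<bar>t - w\<bar> < d1/2" using ds by (simp_all add: dist_real_def)
        have "\<bar>(t - w) - (s - v)\<bar> \<le> \<bar>t - w\<bar> + \<bar>s - v\<bar>" by (rule abs_triangle_ineq4)
        moreover have "t - s - (w - v) = (t - w) - (s - v)" by simp
        ultimately have "dist (t - s) (w - v) \<le> \<bar>t - w\<bar> + \<bar>s - v\<bar>" by (simp add: dist_real_def)
        then have "dist (t - s) (w - v) < d1" using a by linarith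
        moreover have "(s, x) \<in> S" unfolding S_def using st by simp
        ultimately show ?thesis using d1(2) False st by fastforce
      qed
      have B: "\<bar>h0 (s, x) - h0 (v, x)\<bar> < e/2"
        using d2(2) ds st vw unfolding S_def by (simp add: dist_pair_same)
      show "\<bar>evol P (fst p) (snd p) f x - evol P v w f x\<bar> \<le> e"
        unfolding pst fst_conv snd_conv e1 e2 using A B by linarith
    qed
  qed simp
qed

end


lemma FE_map:
  assumes H: "feller_evolution TT U" and st: "s \<in> TT" "t \<in> TT" "s \<le> t" and f: "f \<in> C_inf UNIV"
  shows "U s t f \<in> C_inf UNIV"
  by (rule bspec[OF conjunct1[OF mp[OF bspec[OF bspec[OF conjunct1[OF H[unfolded feller_evolution_def]] st(1)] st(2)] st(3)]] f])

lemma FE_sc: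
  assumes H: "feller_evolution TT U" and vw: "v \<in> TT" "w \<in> TT" "v \<le> w" and f: "f \<in> C_inf UNIV"
  shows "((\<lambda>(s, t). supnorm UNIV (\<lambda>x. U s t f x - U v w f x)) \<longlongrightarrow> 0)
          (at (v, w) within {(s, t). s \<in> TT \<and> t \<in> TT \<and> s \<le> t})"
  by (rule bspec[OF mp[OF bspec[OF bspec[OF conjunct2[OF conjunct2[OF conjunct2[OF H[unfolded feller_evolution_def]]]] vw(1)] vw(2)] vw(3)] f])

lemma dist_pair_same2: "dist (x, a) (x, c) = dist a c"
  unfolding dist_Pair_Pair by simp

context
  fixes TT :: "real set" and P :: "real \<Rightarrow> real \<Rightarrow> real^'d \<Rightarrow> (real^'d) measure"
  assumes ts: "time_set TT" and mt: "markov_transition TT P"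
    and FE: "feller_evolution TT (evol P)"
begin

lemma A_F_Cinf:
  fixes f :: "real \<times> (real^'d) \<Rightarrow> real"
  assumes f: "f \<in> C_inf (TT \<times> UNIV)" and s: "s \<in> TT" and r: "r \<ge> 0"
  shows "(\<lambda>x. spacetime_sg P r f (s, x)) \<in> C_inf UNIV"
proof -
  have t: "s + r \<in> TT" using TT_add[OF ts mt s r] .
  have "evol P s (s + r) (\<lambda>y. f (s + r, y)) \<in> C_inf UNIV"
    by (rule FE_map[OF FE s t _ Cinf_slice[OF f t]]) (use r in simp)
  then show ?thesis unfolding sg_pair[OF ts mt] by (simp add: eta_contract_eq)
qed

lemma A_JC:
  fixes f :: "real \<times> (real^'d) \<Rightarrow> real"
  assumes f: "f \<in> C_inf (TT \<times> UNIV)" and s0: "s0 \<in> TT" and r0: "r0 \<ge> 0" and e: "e > 0"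
  shows "\<exists>d>0. \<forall>s\<in>TT. \<forall>r. r \<ge> 0 \<longrightarrow> \<bar>s - s0\<bar> < d \<longrightarrow> \<bar>r - r0\<bar> < d \<longrightarrow>
     (\<forall>x. \<bar>spacetime_sg P r f (s, x) - spacetime_sg P r0 f (s0, x)\<bar> \<le> e)"
proof -
  define S where "S = TT \<times> (UNIV :: (real^'d) set)"
  define t0 where "t0 = s0 + r0"
  have t0: "t0 \<in> TT" "s0 \<le> t0" unfolding t0_def using TT_add[OF ts mt s0 r0] r0 by auto
  define h where "h = (\<lambda>y. f (t0, y))"
  have hC: "h \<in> C_inf UNIV" unfolding h_def by (rule Cinf_slice[OF f t0(1)])
  obtain Bh where Bh: "\<And>y. \<bar>h y\<bar> \<le> Bh" using Cinf_UNIV_bound[OF hC] by blast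
  obtain d1 where d1: "d1 > 0" "\<forall>z\<in>S. \<forall>z'\<in>S. dist z z' < d1 \<longrightarrow> \<bar>f z - f z'\<bar> < e/2"
    using Cinf_ucont[OF S_closed[OF ts mt] f, of "e/2"] e unfolding S_def by auto
  define Q where "Q = {(s, t). s \<in> TT \<and> t \<in> TT \<and> s \<le> t}"
  have "((\<lambda>(s, t). supnorm UNIV (\<lambda>x. evol P s t h x - evol P s0 t0 h x)) \<longlongrightarrow> 0) (at (s0, t0) within Q)"
    unfolding Q_def by (rule FE_sc[OF FE s0 t0 hC])
  moreover have "(\<lambda>(s, t). supnorm UNIV (\<lambda>x. evol P s t h x - evol P s0 t0 h x)) =
      (\<lambda>p. supnorm UNIV (\<lambda>x. evol P (fst p) (snd p) h x - evol P s0 t0 h x))"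
    by (simp add: case_prod_beta')
  ultimately have lim: "((\<lambda>p. supnorm UNIV (\<lambda>x. evol P (fst p) (snd p) h x - evol P s0 t0 h x)) \<longlongrightarrow> 0) (at (s0, t0) within Q)"
    by simp
  have "eventually (\<lambda>p. bdd_above ((\<lambda>x. \<bar>evol P (fst p) (snd p) h x - evol P s0 t0 h x\<bar>) ` UNIV)) (at (s0, t0) within Q)"
    unfolding eventually_at
    by (rule exI[of _ 1]) (auto simp: Q_def intro!: bdd_diff FE_map[OF FE _ _ _ hC] t0 s0)
  from tendsto_supnormD[OF lim this, of "e/2"] e
  have "eventually (\<lambda>p. \<forall>x\<in>UNIV. \<bar>evol P (fst p) (snd p) h x - evol P s0 t0 h x\<bar> < e/2) (at (s0, t0) within Q)"
    by simp
  then obtain d2 where d2: "d2 > 0" "\<forall>p\<in>Q. p \<noteq> (s0, t0) \<and> dist p (s0, t0) < d2 \<longrightarrow>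
      (\<forall>x\<in>UNIV. \<bar>evol P (fst p) (snd p) h x - evol P s0 t0 h x\<bar> < e/2)"
    unfolding eventually_at by blast
  show ?thesis
  proof (intro exI[of _ "min (d1/2) (d2/3)"] conjI ballI allI impI)
    show "min (d1/2) (d2/3) > 0" using d1 d2 by simp
    fix s r x assume s: "s \<in> TT" and r: "r \<ge> 0" and ds: "\<bar>s - s0\<bar> < min (d1/2) (d2/3)"
      and dr: "\<bar>r - r0\<bar> < min (d1/2) (d2/3)"
    define t where "t = s + r"
    have t: "t \<in> TT" "s \<le> t" unfolding t_def using TT_add[OF ts mt s r] r by auto
    have dt: "\<bar>t - t0\<bar> \<le> \<bar>s - s0\<bar> + \<bar>r - r0\<bar>" unfolding t_def t0_def by simp
    define g where "g = (\<lambda>y. f (t, y))"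
    have gC: "g \<in> C_inf UNIV" unfolding g_def by (rule Cinf_slice[OF f t(1)])
    obtain Bg where Bg: "\<And>y. \<bar>g y\<bar> \<le> Bg" using Cinf_UNIV_bound[OF gC] by blast
    have gh: "\<bar>g y - h y\<bar> \<le> e/2" for y
    proof -
      have "dist (t, y) (t0, y) < d1" using dt ds dr by (simp add: dist_pair_same dist_real_def)
      then show ?thesis unfolding g_def h_def using d1(2) t(1) t0(1) unfolding S_def by fastforce
    qed
    have P1: "\<bar>evol P s t g x - evol P s t h x\<bar> \<le> e/2"
      unfolding evol_diff[OF mt s t(1) t(2) Cinf_meas[OF gC] Bg Cinf_meas[OF hC] Bh]
      by (rule evol_bound[OF mt s t(1) t(2) _ gh])
         (intro borel_measurable_diff Cinf_meas gC hC)
    have P2: "\<bar>evol P s t h x - evol P s0 t0 h x\<bar> \<le> e/2"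
    proof (cases "(s, t) = (s0, t0)")
      case True then show ?thesis using e by auto
    next
      case False
      have "dist (s, t) (s0, t0) \<le> dist s s0 + dist t t0" by (rule dist_pair_le)
      also have "\<dots> < d2" using dt ds dr by (simp add: dist_real_def)
      finally have "dist (s, t) (s0, t0) < d2" .
      moreover have "(s, t) \<in> Q" unfolding Q_def using s t by simp
      ultimately have "\<forall>x\<in>UNIV. \<bar>evol P (fst (s, t)) (snd (s, t)) h x - evol P s0 t0 h x\<bar> < e/2"
        using d2(2) False by blast
      then have "\<bar>evol P s t h x - evol P s0 t0 h x\<bar> < e/2" by simp
      then show ?thesis by simp
    qed
    have eq1: "spacetime_sg P r f (s, x) = evol P s t g x"
      unfolding sg_pair[OF ts mt] t_def g_def ..
    have eq2: "spacetime_sg P r0 f (s0, x) = evol P s0 t0 h x"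
      unfolding sg_pair[OF ts mt] t0_def h_def ..
    show "\<bar>spacetime_sg P r f (s, x) - spacetime_sg P r0 f (s0, x)\<bar> \<le> e"
      unfolding eq1 eq2 using P1 P2 by linarith
  qed
qed

end


lemma Cinf_tail:
  fixes f :: "real \<times> 'a::euclidean_space \<Rightarrow> real"
  assumes f: "f \<in> C_inf (TT \<times> UNIV)" and e: "e > 0"
  shows "\<exists>R. \<forall>r\<in>TT. \<bar>r\<bar> > R \<longrightarrow> (\<forall>y. \<bar>f (r, y)\<bar> < e)"
proof -
  have H: "\<forall>e>0. \<exists>K. compact K \<and> K \<subseteq> TT \<times> UNIV \<and> (\<forall>x\<in>TT \<times> UNIV - K. \<bar>f x\<bar> < e)"
    using f unfolding C_inf_def by simp
  obtain K where K: "compact K" "\<forall>x\<in>TT \<times> UNIV - K. \<bar>f x\<bar> < e" using H e by blast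
  have "bounded K" using K(1) by (rule compact_imp_bounded)
  then obtain R where R: "\<forall>z\<in>K. norm z \<le> R" unfolding bounded_iff by blast
  show ?thesis
  proof (intro exI[of _ R] ballI impI allI)
    fix r and y :: 'a assume r: "r \<in> TT" "\<bar>r\<bar> > R"
    have "norm r \<le> norm (r, y)" by (rule norm_fst_le)
    then have "(r, y) \<notin> K" using R r(2) by force
    then show "\<bar>f (r, y)\<bar> < e" using K(2) r(1) by blast
  qed
qed

context
  fixes TT :: "real set" and P :: "real \<Rightarrow> real \<Rightarrow> real^'d \<Rightarrow> (real^'d) measure"
  assumes ts: "time_set TT" and mt: "markov_transition TT P"
    and FE: "feller_evolution TT (evol P)"
begin

lemma A_small:
  fixes f :: "real \<times> (real^'d) \<Rightarrow> real"
  assumes f: "f \<in> C_inf (TT \<times> UNIV)" and s: "s \<in> TT" and t: "t \<ge> 0"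
    and B: "\<And>y. \<bar>f (s + t, y)\<bar> \<le> B"
  shows "\<bar>spacetime_sg P t f (s, x)\<bar> \<le> B"
proof -
  have st: "s + t \<in> TT" using TT_add[OF ts mt s t] .
  show ?thesis unfolding sg_pair[OF ts mt]
    by (rule evol_bound[OF mt s st _ slice_props(1)[OF ts mt f st] B]) (use t in simp)
qed

lemma A_cont:
  fixes f :: "real \<times> (real^'d) \<Rightarrow> real"
  assumes f: "f \<in> C_inf (TT \<times> UNIV)" and t: "t \<ge> 0"
  shows "continuous_on (TT \<times> UNIV) (spacetime_sg P t f)"
  unfolding continuous_on_iff
proof (intro ballI allI impI)
  fix z0 :: "real \<times> (real^'d)" and e :: real assume z0: "z0 \<in> TT \<times> UNIV" and e: "e > 0"
  obtain s0 x0 where zz: "z0 = (s0, x0)" "s0 \<in> TT" using z0 by auto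
  obtain d1 where d1: "d1 > 0" "\<forall>s\<in>TT. \<forall>r. r \<ge> 0 \<longrightarrow> \<bar>s - s0\<bar> < d1 \<longrightarrow> \<bar>r - t\<bar> < d1 \<longrightarrow>
     (\<forall>x. \<bar>spacetime_sg P r f (s, x) - spacetime_sg P t f (s0, x)\<bar> \<le> e/2)"
    using A_JC[OF ts mt FE f zz(2) t, of "e/2"] e by auto
  have "continuous_on UNIV (\<lambda>x. spacetime_sg P t f (s0, x))"
    using A_F_Cinf[OF ts mt FE f zz(2) t] unfolding C_inf_def by simp
  then obtain d2 where d2: "d2 > 0" "\<forall>x\<in>UNIV. dist x x0 < d2 \<longrightarrow>
      dist (spacetime_sg P t f (s0, x)) (spacetime_sg P t f (s0, x0)) < e/2"
    unfolding continuous_on_iff using e by (meson UNIV_I half_gt_zero)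
  show "\<exists>d>0. \<forall>z\<in>TT \<times> UNIV. dist z z0 < d \<longrightarrow> dist (spacetime_sg P t f z) (spacetime_sg P t f z0) < e"
  proof (intro exI[of _ "min d1 d2"] conjI ballI impI)
    show "min d1 d2 > 0" using d1 d2 by simp
    fix z :: "real \<times> (real^'d)" assume z: "z \<in> TT \<times> UNIV" "dist z z0 < min d1 d2"
    obtain s x where zs: "z = (s, x)" "s \<in> TT" using z(1) by auto
    have "dist s s0 < min d1 d2" "dist x x0 < min d1 d2"
      using z(2) dist_fst_le[of z z0] dist_snd_le[of z z0] zs zz by auto
    then have a: "\<bar>s - s0\<bar> < d1" "dist x x0 < d2" by (auto simp: dist_real_def)
    have "\<bar>spacetime_sg P t f (s, x) - spacetime_sg P t f (s0, x)\<bar> \<le> e/2"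
      using d1(2) zs(2) t a(1) by simp
    moreover have "\<bar>spacetime_sg P t f (s0, x) - spacetime_sg P t f (s0, x0)\<bar> < e/2"
      using d2(2) a(2) by (simp add: dist_real_def)
    ultimately show "dist (spacetime_sg P t f z) (spacetime_sg P t f z0) < e"
      unfolding zs zz dist_real_def by linarith
  qed
qed

lemma A_van:
  fixes f :: "real \<times> (real^'d) \<Rightarrow> real"
  assumes f: "f \<in> C_inf (TT \<times> UNIV)" and t: "t \<ge> 0" and e: "e > 0"
  shows "\<exists>K. compact K \<and> K \<subseteq> TT \<times> UNIV \<and> (\<forall>z\<in>TT \<times> UNIV - K. \<bar>spacetime_sg P t f z\<bar> < e)"
proof -
  obtain R where R: "\<forall>r\<in>TT. \<bar>r\<bar> > R \<longrightarrow> (\<forall>y. \<bar>f (r, y)\<bar> < e/2)"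
    using Cinf_tail[OF f, of "e/2"] e by auto
  define A where "A = TT \<inter> {-R-t..R-t}"
  have cA: "compact A" unfolding A_def by (rule TT_compact[OF ts mt])
  have "\<exists>K. compact K \<and> (\<forall>a\<in>A. \<forall>x. x \<notin> K \<longrightarrow> \<bar>spacetime_sg P t f (a, x)\<bar> < e)"
  proof (rule compact_unif_vanish[OF cA _ _ e])
    fix a0 e' :: real assume a0: "a0 \<in> A" and e': "e' > 0"
    have a0T: "a0 \<in> TT" using a0 unfolding A_def by simp
    obtain d where d: "d > 0" "\<forall>s\<in>TT. \<forall>r. r \<ge> 0 \<longrightarrow> \<bar>s - a0\<bar> < d \<longrightarrow> \<bar>r - t\<bar> < d \<longrightarrow>
       (\<forall>x. \<bar>spacetime_sg P r f (s, x) - spacetime_sg P t f (a0, x)\<bar> \<le> e')"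
      using A_JC[OF ts mt FE f a0T t e'] by auto
    show "\<exists>d>0. \<forall>a\<in>A. dist a a0 < d \<longrightarrow> (\<forall>x. \<bar>spacetime_sg P t f (a, x) - spacetime_sg P t f (a0, x)\<bar> \<le> e')"
      using d t unfolding A_def by (auto simp: dist_real_def)
  next
    fix a e' :: real assume a: "a \<in> A" and e': "e' > 0"
    have aT: "a \<in> TT" using a unfolding A_def by simp
    have "(\<lambda>x. spacetime_sg P t f (a, x)) \<in> C_inf UNIV" by (rule A_F_Cinf[OF ts mt FE f aT t])
    then have "\<forall>e>0. \<exists>K. compact K \<and> K \<subseteq> UNIV \<and> (\<forall>x\<in>UNIV - K. \<bar>spacetime_sg P t f (a, x)\<bar> < e)"
      unfolding C_inf_def by simp
    then obtain K where "compact K" "\<forall>x\<in>UNIV - K. \<bar>spacetime_sg P t f (a, x)\<bar> < e'" using e' by blast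
    then show "\<exists>K. compact K \<and> (\<forall>x. x \<notin> K \<longrightarrow> \<bar>spacetime_sg P t f (a, x)\<bar> < e')" by blast
  qed
  then obtain K' where K': "compact K'" "\<forall>a\<in>A. \<forall>x. x \<notin> K' \<longrightarrow> \<bar>spacetime_sg P t f (a, x)\<bar> < e"
    by blast
  show ?thesis
  proof (intro exI[of _ "A \<times> K'"] conjI ballI)
    show "compact (A \<times> K')" using cA K'(1) by (rule compact_Times)
    show "A \<times> K' \<subseteq> TT \<times> UNIV" unfolding A_def by auto
    fix z assume z: "z \<in> TT \<times> UNIV - A \<times> K'"
    obtain s x where zs: "z = (s, x)" "s \<in> TT" using z by auto
    show "\<bar>spacetime_sg P t f z\<bar> < e"
    proof (cases "s \<in> {-R-t..R-t}")
      case True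
      then have "s \<in> A" "x \<notin> K'" using z zs unfolding A_def by auto
      then show ?thesis using K'(2) zs by blast
    next
      case False
      then have "\<bar>s + t\<bar> > R" by auto
      moreover have "s + t \<in> TT" using TT_add[OF ts mt zs(2) t] .
      ultimately have "\<forall>y. \<bar>f (s + t, y)\<bar> \<le> e/2" using R by (meson less_imp_le)
      then have "\<bar>spacetime_sg P t f (s, x)\<bar> \<le> e/2" using A_small[OF f zs(2) t] by blast
      then show ?thesis using zs e by simp
    qed
  qed
qed

lemma A_Cinf:
  fixes f :: "real \<times> (real^'d) \<Rightarrow> real"
  assumes f: "f \<in> C_inf (TT \<times> UNIV)" and t: "t \<ge> 0"
  shows "spacetime_sg P t f \<in> C_inf (TT \<times> UNIV)"
  unfolding C_inf_def using A_cont[OF f t] A_van[OF f t] by simp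

lemma A_sc:
  fixes f :: "real \<times> (real^'d) \<Rightarrow> real"
  assumes f: "f \<in> C_inf (TT \<times> UNIV)" and t0: "t0 \<ge> 0"
  shows "((\<lambda>r. supnorm (TT \<times> UNIV) (\<lambda>z. spacetime_sg P r f z - spacetime_sg P t0 f z)) \<longlongrightarrow> 0) (at t0 within {0..})"
proof (rule tendsto_supnormI[OF S_ne[OF ts mt]])
  fix e :: real assume e: "e > 0"
  obtain R where R: "\<forall>r\<in>TT. \<bar>r\<bar> > R \<longrightarrow> (\<forall>y. \<bar>f (r, y)\<bar> < e/4)"
    using Cinf_tail[OF f, of "e/4"] e by auto
  define A where "A = TT \<inter> {-R-1-t0..R+1-t0}"
  define Bs where "Bs = {max 0 (t0-1)..t0+1}"
  have cAB: "compact (A \<times> Bs)" unfolding A_def Bs_def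
    by (intro compact_Times TT_compact[OF ts mt] compact_Icc)
  have "\<exists>d>0. \<forall>p\<in>A \<times> Bs. \<forall>p'\<in>A \<times> Bs. dist p p' < d \<longrightarrow>
      (\<forall>x. \<bar>spacetime_sg P (snd p) f (fst p, x) - spacetime_sg P (snd p') f (fst p', x)\<bar> \<le> e/2)"
  proof (rule compact_unif_cont[OF cAB])
    fix p0 :: "real \<times> real" and e' :: real assume p0: "p0 \<in> A \<times> Bs" and e': "e' > 0"
    have p0T: "fst p0 \<in> TT" "snd p0 \<ge> 0" using p0 unfolding A_def Bs_def by auto
    obtain d where d: "d > 0" "\<forall>s\<in>TT. \<forall>r. r \<ge> 0 \<longrightarrow> \<bar>s - fst p0\<bar> < d \<longrightarrow> \<bar>r - snd p0\<bar> < d \<longrightarrow>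
       (\<forall>x. \<bar>spacetime_sg P r f (s, x) - spacetime_sg P (snd p0) f (fst p0, x)\<bar> \<le> e')"
      using A_JC[OF ts mt FE f p0T e'] by auto
    show "\<exists>d>0. \<forall>p\<in>A \<times> Bs. dist p p0 < d \<longrightarrow>
      (\<forall>x. \<bar>spacetime_sg P (snd p) f (fst p, x) - spacetime_sg P (snd p0) f (fst p0, x)\<bar> \<le> e')"
    proof (intro exI[of _ d] conjI ballI impI)
      fix p assume p: "p \<in> A \<times> Bs" "dist p p0 < d"
      have "\<bar>fst p - fst p0\<bar> < d" "\<bar>snd p - snd p0\<bar> < d"
        using p(2) dist_fst_le[of p p0] dist_snd_le[of p p0] by (auto simp: dist_real_def)
      moreover have "fst p \<in> TT" "snd p \<ge> 0" using p(1) unfolding A_def Bs_def by auto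
      ultimately show "\<forall>x. \<bar>spacetime_sg P (snd p) f (fst p, x) - spacetime_sg P (snd p0) f (fst p0, x)\<bar> \<le> e'"
        using d(2) by blast
    qed (use d in simp)
  qed (use e in simp)
  then obtain d where d: "d > 0" "\<forall>p\<in>A \<times> Bs. \<forall>p'\<in>A \<times> Bs. dist p p' < d \<longrightarrow>
      (\<forall>x. \<bar>spacetime_sg P (snd p) f (fst p, x) - spacetime_sg P (snd p') f (fst p', x)\<bar> \<le> e/2)"
    by blast
  show "eventually (\<lambda>r. \<forall>z\<in>TT \<times> UNIV. \<bar>spacetime_sg P r f z - spacetime_sg P t0 f z\<bar> \<le> e) (at t0 within {0..})"
    unfolding eventually_at
  proof (intro exI[of _ "min d 1"] conjI ballI impI)
    show "min d 1 > 0" using d by simp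
    fix r :: real and z :: "real \<times> (real^'d)" assume r: "r \<in> {0..}" "r \<noteq> t0 \<and> dist r t0 < min d 1"
      and z: "z \<in> TT \<times> UNIV"
    obtain s x where zs: "z = (s, x)" "s \<in> TT" using z by auto
    have r0: "r \<ge> 0" "\<bar>r - t0\<bar> < 1" "dist r t0 < d" using r by (auto simp: dist_real_def)
    show "\<bar>spacetime_sg P r f z - spacetime_sg P t0 f z\<bar> \<le> e"
    proof (cases "s \<in> {-R-1-t0..R+1-t0}")
      case True
      have "(s, r) \<in> A \<times> Bs" "(s, t0) \<in> A \<times> Bs" using True zs(2) r0 t0 unfolding A_def Bs_def by auto
      moreover have "dist (s, r) (s, t0) < d" using r0(3) by (simp add: dist_pair_same2)
      ultimately have "\<bar>spacetime_sg P r f (s, x) - spacetime_sg P t0 f (s, x)\<bar> \<le> e/2"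
        using d(2) by fastforce
      then show ?thesis using zs e by simp
    next
      case False
      have h1: "\<bar>s + t0\<bar> > R" "\<bar>s + r\<bar> > R" using False r0(2) by auto
      have T1: "s + t0 \<in> TT" "s + r \<in> TT" using TT_add[OF ts mt zs(2)] t0 r0(1) by auto
      have "\<forall>y. \<bar>f (s + t0, y)\<bar> \<le> e/4" using R h1(1) T1(1) by (meson less_imp_le)
      then have a1: "\<bar>spacetime_sg P t0 f (s, x)\<bar> \<le> e/4" using A_small[OF f zs(2) t0] by blast
      have "\<forall>y. \<bar>f (s + r, y)\<bar> \<le> e/4" using R h1(2) T1(2) by (meson less_imp_le)
      then have a2: "\<bar>spacetime_sg P r f (s, x)\<bar> \<le> e/4" using A_small[OF f zs(2) r0(1)] by blast
      show ?thesis unfolding zs using a1 a2 e by linarith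
    qed
  qed
qed

end

theorem theorem3p2:
  fixes TT :: "real set"
    and P :: "real \<Rightarrow> real \<Rightarrow> real^'d \<Rightarrow> (real^'d) measure"
  assumes "time_set TT"
    and "markov_transition TT P"
  shows "feller_evolution TT (evol P) \<longleftrightarrow>
         feller_semigroup (TT \<times> (UNIV :: (real^'d) set)) (spacetime_sg P)"
proof
  assume FE: "feller_evolution TT (evol P)"
  show "feller_semigroup (TT \<times> (UNIV :: (real^'d) set)) (spacetime_sg P)"
    by (rule feller_semigroupI[OF assms A_Cinf[OF assms FE] A_sc[OF assms FE]])
next
  assume FS: "feller_semigroup (TT \<times> (UNIV :: (real^'d) set)) (spacetime_sg P)"
  show "feller_evolution TT (evol P)"
    by (rule feller_evolutionI[OF assms B_map[OF assms FS] B_sc[OF assms FS]])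
qed


end
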